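(* Let $b>0$ and $N_{\rm r}\ge 1$, and let $x_1,\dots,x_{N_{\rm r}}\in\mathbb{C}$ be inputs satisfying $|\Re(x_k)|\le b$ and $|\Im(x_k)|\le b$ for all $k$. Define the first-order 1-bit spatial sigma-delta recursion with zero feedback phase shift (steering angle $\psi=0$) by $e_0=0$ and, for $n=1,\dots,N_{\rm r}$, $$r_n = x_n - e_{n-1},\qquad y_n=\mathcal{Q}_b[r_n],\qquad e_n = y_n - r_n,$$ where $\mathcal{Q}_b[u]=b\,\mathrm{sign}(\Re(u))+\jmath\, b\,\mathrm{sign}(\Im(u))$. Then for every $n=1,\dots,N_{\rm r}$, $$\Re(e_n) = b - 2b\left\langle \tfrac{1}{2}(n-1) + \tfrac{1}{2b}\sum_{k=1}^{n}\Re(x_k)\right\rangle,\qquad \Im(e_n) = b - 2b\left\langle \tfrac{1}{2}(n-1) + \tfrac{1}{2b}\sum_{k=1}^{n}\Im(x_k)\right\rangle,$$ where $\langle u\rangle = u-\lfloor u\rfloor$ denotes the fractional part of a real number $u$.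
   Context: $\jmath=\sqrt{-1}$. The function $\mathrm{sign}:\mathbb{R}\to\{-1,1\}$ is taken with the convention $\mathrm{sign}(u)=1$ for $u\ge 0$ and $\mathrm{sign}(u)=-1$ for $u<0$. In the paper the inputs $x_n$ are the antenna signals after an amplitude clipper with clipping level $c$; for steering angle $\psi=0$ the paper's overload condition $c=b(2-|\cos\varphi|-|\sin\varphi|)$ with $\varphi=0$ gives $c=b$, so the (clipped) inputs have real and imaginary parts bounded in absolute value by $b$. The quantity $e_n$ is the quantization error of channel (antenna) $n$, fed back to the input of channel $n+1$. *)

theory Defs
  imports Complex_Main
begin

definition sign1 :: "real \<Rightarrow> real" where
  "sign1 u = (if u \<ge> 0 then 1 else -1)"

definition quant :: "real \<Rightarrow> complex \<Rightarrow> complex" where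
  "quant b u = Complex (b * sign1 (Re u)) (b * sign1 (Im u))"

fun sd_err :: "real \<Rightarrow> (nat \<Rightarrow> complex) \<Rightarrow> nat \<Rightarrow> complex" where
  "sd_err b x 0 = 0"
| "sd_err b x (Suc n) =
     (let r = x (Suc n) - sd_err b x n; y = quant b r in y - r)"

end

theory Submission
  imports Defs
begin

lemma step:
  fixes b a S :: real
  assumes b: "b > 0" and a: "\<bar>a\<bar> \<le> b"
  shows "b * sign1 (a - (b - 2*b*frac S)) - (a - (b - 2*b*frac S))
       = b - 2*b*frac (S + 1/2 + a/(2*b))"
proof -
  define f where "f = frac S"
  have f: "0 \<le> f" "f < 1" using frac_lt_1 frac_ge_0 f_def by auto
  have Sf: "S = of_int \<lfloor>S\<rfloor> + f" by (simp add: f_def frac_def)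
  have t: "-1/2 \<le> a/(2*b)" "a/(2*b) \<le> 1/2" using a b by (auto simp: field_simps abs_le_iff)
  have r: "a - (b - 2*b*f) = 2*b*(f + 1/2 + a/(2*b) - 1)" using b by (simp add: field_simps)
  show ?thesis
  proof (cases "f + 1/2 + a/(2*b) \<ge> 1")
    case True
    have fl: "\<lfloor>S + 1/2 + a/(2*b)\<rfloor> = \<lfloor>S\<rfloor> + 1"
      unfolding floor_eq_iff using True f t Sf by linarith
    have "a - (b - 2*b*f) \<ge> 0" using r True b by simp
    moreover have "frac (S + 1/2 + a/(2*b)) = f + 1/2 + a/(2*b) - 1"
      unfolding frac_def fl using Sf by linarith
    ultimately show ?thesis unfolding f_def[symmetric] sign1_def
      using b by (simp add: field_simps)
  next
    case False
    have fl: "\<lfloor>S + 1/2 + a/(2*b)\<rfloor> = \<lfloor>S\<rfloor>"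
      unfolding floor_eq_iff using False f t Sf by linarith
    have "a - (b - 2*b*f) < 0" using r False b by (simp add: mult_pos_neg)
    moreover have "frac (S + 1/2 + a/(2*b)) = f + 1/2 + a/(2*b)"
      unfolding frac_def fl using Sf by linarith
    ultimately show ?thesis unfolding f_def[symmetric] sign1_def
      using b by (simp add: field_simps)
  qed
qed

lemma gen:
  fixes b :: real and a g :: "nat \<Rightarrow> real"
  assumes b: "b > 0"
    and g0: "g 0 = 0"
    and gs: "\<And>n. g (Suc n) = b * sign1 (a (Suc n) - g n) - (a (Suc n) - g n)"
  shows "(\<forall>k\<in>{1..n}. \<bar>a k\<bar> \<le> b) \<Longrightarrow>
     g n = b - 2 * b * frac ((real n - 1) / 2 + (1 / (2 * b)) * (\<Sum>k=1..n. a k))"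
proof (induction n)
  case 0
  have "frac (-1/2 :: real) = 1/2"
    by (simp add: frac_def floor_eq_iff)
  then show ?case using g0 by simp
next
  case (Suc n)
  have IH: "g n = b - 2 * b * frac ((real n - 1) / 2 + (1 / (2 * b)) * (\<Sum>k=1..n. a k))"
    using Suc by auto
  have aa: "\<bar>a (Suc n)\<bar> \<le> b" using Suc.prems by auto
  have e: "(real (Suc n) - 1) / 2 + (1 / (2 * b)) * (\<Sum>k=1..Suc n. a k)
     = ((real n - 1) / 2 + (1 / (2 * b)) * (\<Sum>k=1..n. a k)) + 1/2 + a (Suc n)/(2*b)"
    using b by (simp add: field_simps)
  show ?case unfolding gs IH e by (rule step[OF b aa])
qed

theorem lemma1:
  fixes b :: real and Nr :: nat and x :: "nat \<Rightarrow> complex"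
  assumes "b > 0" and "Nr \<ge> 1"
    and "\<forall>k\<in>{1..Nr}. \<bar>Re (x k)\<bar> \<le> b \<and> \<bar>Im (x k)\<bar> \<le> b"
  shows "\<forall>n\<in>{1..Nr}.
     Re (sd_err b x n) = b - 2 * b * frac ((real n - 1) / 2 + (1 / (2 * b)) * (\<Sum>k=1..n. Re (x k)))
   \<and> Im (sd_err b x n) = b - 2 * b * frac ((real n - 1) / 2 + (1 / (2 * b)) * (\<Sum>k=1..n. Im (x k)))"
proof
  fix n assume n: "n \<in> {1..Nr}"
  have hR: "\<forall>k\<in>{1..n}. \<bar>Re (x k)\<bar> \<le> b" and hI: "\<forall>k\<in>{1..n}. \<bar>Im (x k)\<bar> \<le> b"
    using assms(3) n by auto
  show "Re (sd_err b x n) = b - 2 * b * frac ((real n - 1) / 2 + (1 / (2 * b)) * (\<Sum>k=1..n. Re (x k)))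
   \<and> Im (sd_err b x n) = b - 2 * b * frac ((real n - 1) / 2 + (1 / (2 * b)) * (\<Sum>k=1..n. Im (x k)))"
  proof
    show "Re (sd_err b x n) = b - 2 * b * frac ((real n - 1) / 2 + (1 / (2 * b)) * (\<Sum>k=1..n. Re (x k)))"
      by (rule gen[where g="\<lambda>n. Re (sd_err b x n)", OF assms(1) _ _ hR])
         (simp_all add: quant_def Let_def)
    show "Im (sd_err b x n) = b - 2 * b * frac ((real n - 1) / 2 + (1 / (2 * b)) * (\<Sum>k=1..n. Im (x k)))"
      by (rule gen[where g="\<lambda>n. Im (sd_err b x n)", OF assms(1) _ _ hI])
         (simp_all add: quant_def Let_def)
  qed
qed

end
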